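(* Let $H^n$ be a binary Hamming code of length $n=2^k-1$ and $\lambda:H^n\to\{0,1\}$ a Boolean function with $\lambda(0^n)=0$. For $m=2^j(n+1)-1$, $j\ge 0$, define Hamming codes recursively by $H^{2m+1}=\{(x+y,|x|,x)\mid x\in F^m,\ y\in H^m\}$, and define $\lambda_m:H^m\to\{0,1\}$ by $\lambda_n=\lambda$ and $\lambda_{2m+1}(w)=\lambda_m(y)$ whenever $w\in (y,0^{m+1})+R^{2m+1}_{m+1}$, $y\in H^m$. Let $C_0=V_{H^n}^\lambda=\{(x+y,|x|+\lambda(y),x)\mid x\in F^n, y\in H^n\}$, $C_{i+1}=\{(x+y,|x|,x)\mid x\in F^{\ell_i},\ y\in C_i\}$ where $\ell_i$ is the length of $C_i$, let $s\ge 0$ and $C=C_s$, of length $N=2^{s+1}(n+1)-1$. Then: 1. $C$ is equivalent to the code $V_{H^{(N-1)/2}}^{\lambda_{(N-1)/2}}=\{(x+y,|x|+\lambda_{(N-1)/2}(y),x)\mid x\in F^{(N-1)/2},\ y\in H^{(N-1)/2}\}$. 2. If $R_j^{(N-1)/2}$ (a component of $H^{(N-1)/2}$, $1\le j\le (N-1)/2$) pierces the zeros and ones of $\lambda_{(N-1)/2}$, then the components $R_j^N$ and $R_{j+(N+1)/2}^N$ of $H^N$ pierce the zeros and ones of $\lambda_N$.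
   Context: $|x|=x_1+\dots+x_m\pmod 2$ for $x\in F^m$. For a binary perfect code of length $m$ (here a Hamming code $H^m$) and $i\in\{1,\dots,m\}$, the (linear) $i$-component $R_i^m$ is the linear span of the weight-3 codewords whose support contains $i$; for $H^{2m+1}$ as defined, $R^{2m+1}_{m+1}=\{(x,|x|,x)\mid x\in F^m\}$, and its cosets $(y,0^{m+1})+R^{2m+1}_{m+1}$, $y\in H^m$, partition $H^{2m+1}$. A component $R$ pierces the zeros and ones of a function $\mu$ if $R$ contains both codewords where $\mu=0$ and codewords where $\mu=1$. Two codes of length $N$ are equivalent if one is mapped onto the other by an automorphism of $F^N$ (a translation followed by a coordinate permutation). *)

theory Defs
  imports Main
begin

text \<open>Binary vectors of length m are boolean lists of length m (False = 0, True = 1).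
  Coordinates are numbered 1..m in the paper; coordinate i is list index i - 1.\<close>

type_synonym vec = "bool list"

definition F :: "nat \<Rightarrow> vec set" where
  "F m = {x. length x = m}"

definition vadd :: "vec \<Rightarrow> vec \<Rightarrow> vec" where
  "vadd x y = map2 (\<noteq>) x y"

definition zerov :: "nat \<Rightarrow> vec" where
  "zerov m = replicate m False"

definition wt :: "vec \<Rightarrow> nat" where
  "wt x = length (filter id x)"

definition par :: "vec \<Rightarrow> bool" where
  "par x = odd (wt x)"

definition hdist :: "vec \<Rightarrow> vec \<Rightarrow> nat" where
  "hdist x y = wt (vadd x y)"

definition is_hamming_code :: "nat \<Rightarrow> vec set \<Rightarrow> bool" where
  "is_hamming_code n H \<longleftrightarrow> H \<subseteq> F n \<and> zerov n \<in> H \<and>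
     (\<forall>x\<in>H. \<forall>y\<in>H. vadd x y \<in> H) \<and>
     (\<forall>v\<in>F n. \<exists>!c. c \<in> H \<and> hdist v c \<le> 1)"

definition double :: "nat \<Rightarrow> vec set \<Rightarrow> vec set" where
  "double m C = {vadd x y @ [par x] @ x | x y. x \<in> F m \<and> y \<in> C}"

definition Vcode :: "nat \<Rightarrow> vec set \<Rightarrow> (vec \<Rightarrow> bool) \<Rightarrow> vec set" where
  "Vcode m H l = {vadd x y @ [par x \<noteq> l y] @ x | x y. x \<in> F m \<and> y \<in> H}"

definition hlen :: "nat \<Rightarrow> nat \<Rightarrow> nat" where
  "hlen n j = 2 ^ j * (n + 1) - 1"

text \<open>hamH n H j = H^(hlen n j), defined recursively via H^(2m+1).\<close>
primrec hamH :: "nat \<Rightarrow> vec set \<Rightarrow> nat \<Rightarrow> vec set" where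
  "hamH n H 0 = H"
| "hamH n H (Suc j) = double (hlen n j) (hamH n H j)"

text \<open>lamseq n H l j = lambda_(hlen n j): lambda_(2m+1)(w) = lambda_m(y) whenever
  w lies in (y,0^(m+1)) + R^(2m+1)_(m+1), y in H^m, where
  R^(2m+1)_(m+1) = {(x,|x|,x) | x in F^m}.\<close>
primrec lamseq :: "nat \<Rightarrow> vec set \<Rightarrow> (vec \<Rightarrow> bool) \<Rightarrow> nat \<Rightarrow> vec \<Rightarrow> bool" where
  "lamseq n H l 0 = l"
| "lamseq n H l (Suc j) = (\<lambda>w. lamseq n H l j
      (THE y. y \<in> hamH n H j \<and>
         (\<exists>x \<in> F (hlen n j). w = vadd (y @ zerov (hlen n j + 1)) (x @ [par x] @ x))))"

text \<open>C_0 = V_(H^n)^lambda, C_(i+1) = {(x+y,|x|,x) | x in F^(l_i), y in C_i},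
  where l_i = length of C_i = hlen n (i+1).\<close>
primrec Cseq :: "nat \<Rightarrow> vec set \<Rightarrow> (vec \<Rightarrow> bool) \<Rightarrow> nat \<Rightarrow> vec set" where
  "Cseq n H l 0 = Vcode n H l"
| "Cseq n H l (Suc i) = double (hlen n (Suc i)) (Cseq n H l i)"

inductive_set gf2span :: "nat \<Rightarrow> vec set \<Rightarrow> vec set" for m S where
  zero: "zerov m \<in> gf2span m S"
| base: "x \<in> S \<Longrightarrow> x \<in> gf2span m S"
| add: "x \<in> gf2span m S \<Longrightarrow> y \<in> gf2span m S \<Longrightarrow> vadd x y \<in> gf2span m S"

definition component :: "nat \<Rightarrow> vec set \<Rightarrow> nat \<Rightarrow> vec set" where
  "component m H i = gf2span m {c \<in> H. wt c = 3 \<and> c ! (i - 1)}"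

definition pierces :: "vec set \<Rightarrow> (vec \<Rightarrow> bool) \<Rightarrow> bool" where
  "pierces R mu \<longleftrightarrow> (\<exists>c\<in>R. mu c = False) \<and> (\<exists>c\<in>R. mu c = True)"

definition codes_equiv :: "nat \<Rightarrow> vec set \<Rightarrow> vec set \<Rightarrow> bool" where
  "codes_equiv N A B \<longleftrightarrow> (\<exists>a \<pi>. a \<in> F N \<and> bij_betw \<pi> {..<N} {..<N} \<and>
     B = (\<lambda>c. map (\<lambda>i. vadd a c ! \<pi> i) [0..<N]) ` A)"

end

theory Submission imports Defs begin

lemma length_vadd[simp]: "length (vadd x y) = min (length x) (length y)"
  by (simp add: vadd_def)
lemma vadd_nth[simp]: "i < length x \<Longrightarrow> i < length y \<Longrightarrow> vadd x y ! i = (x!i \<noteq> y!i)"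
  by (simp add: vadd_def)
lemma vadd_append: "length a = length c \<Longrightarrow> vadd (a@b) (c@d) = vadd a c @ vadd b d"
  by (simp add: vadd_def)
lemma vadd_Cons[simp]: "vadd (x#xs) (y#ys) = (x\<noteq>y) # vadd xs ys"
  by (simp add: vadd_def)
lemma vadd_Nil[simp]: "vadd [] y = []" "vadd x [] = []"
  by (simp_all add: vadd_def)
lemma vadd_comm: "vadd x y = vadd y x"
  by (rule nth_equalityI) auto
lemma vadd_assoc: "vadd (vadd x y) z = vadd x (vadd y z)"
  by (rule nth_equalityI) auto
lemma vadd_self[simp]: "vadd x x = zerov (length x)"
  by (rule nth_equalityI) (auto simp: zerov_def)
lemma length_zerov[simp]: "length (zerov m) = m" by (simp add: zerov_def)
lemma vadd_zero[simp]: "length x = m \<Longrightarrow> vadd (zerov m) x = x"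
  "length x = m \<Longrightarrow> vadd x (zerov m) = x"
  by (rule nth_equalityI; auto simp: zerov_def)+
lemma vadd_cancel1[simp]: "length x = length y \<Longrightarrow> vadd x (vadd x y) = y"
  by (rule nth_equalityI) auto
lemma vadd_cancel2[simp]: "length x = length y \<Longrightarrow> vadd (vadd y x) x = y"
  by (rule nth_equalityI) auto

lemma wt_append[simp]: "wt (a@b) = wt a + wt b" by (simp add: wt_def)
lemma par_append[simp]: "par (a@b) = (par a \<noteq> par b)" by (simp add: par_def)
lemma par_Cons[simp]: "par (b#xs) = (b \<noteq> par xs)" by (simp add: par_def wt_def)
lemma par_Nil[simp]: "par [] = False" by (simp add: par_def wt_def)
lemma par_zerov[simp]: "par (zerov m) = False" by (simp add: par_def wt_def zerov_def)
lemma par_vadd: "length x = length y \<Longrightarrow> par (vadd x y) = (par x \<noteq> par y)"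
  by (induction x y rule: list_induct2) auto
lemma wt_card: "wt x = card {i. i < length x \<and> x!i}"
  by (simp add: wt_def length_filter_conv_card)


definition pmap :: "(nat \<Rightarrow> nat) \<Rightarrow> nat \<Rightarrow> vec \<Rightarrow> vec" where
  "pmap p N c = map (\<lambda>i. c ! p i) [0..<N]"

definition peq :: "nat \<Rightarrow> vec set \<Rightarrow> vec set \<Rightarrow> bool" where
  "peq N A B \<longleftrightarrow> (\<exists>p. bij_betw p {..<N} {..<N} \<and> B = pmap p N ` A)"

lemma length_pmap[simp]: "length (pmap p N c) = N" by (simp add: pmap_def)
lemma pmap_nth[simp]: "i < N \<Longrightarrow> pmap p N c ! i = c ! p i" by (simp add: pmap_def)

lemma pmap_id: "length c = N \<Longrightarrow> pmap id N c = c"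
  by (rule nth_equalityI) auto

lemma pmap_comp: "\<forall>i<N. p i < N \<Longrightarrow> pmap p N (pmap q N c) = pmap (q \<circ> p) N c"
  by (rule nth_equalityI) auto

lemma peq_refl: assumes "A \<subseteq> F N" shows "peq N A A"
proof -
  have "pmap id N ` A = (\<lambda>c. c) ` A"
    by (rule image_cong[OF refl]) (use assms in \<open>auto simp: F_def pmap_id\<close>)
  then have "A = pmap id N ` A" by simp
  then show ?thesis unfolding peq_def by (intro exI[of _ id]) simp
qed

lemma peq_trans: assumes "peq N A B" "peq N B C" shows "peq N A C"
proof -
  obtain p where p: "bij_betw p {..<N} {..<N}" "B = pmap p N ` A" using assms(1) peq_def by blast
  obtain q where q: "bij_betw q {..<N} {..<N}" "C = pmap q N ` B" using assms(2) peq_def by blast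
  have qlt: "\<forall>i<N. q i < N" using q(1) bij_betwE by blast
  have "C = (\<lambda>c. pmap q N (pmap p N c)) ` A" using q(2) p(2) by (simp add: image_image)
  also have "\<dots> = pmap (p \<circ> q) N ` A" by (rule image_cong[OF refl]) (rule pmap_comp[OF qlt])
  finally have "C = pmap (p \<circ> q) N ` A" .
  moreover have "bij_betw (p \<circ> q) {..<N} {..<N}" using p(1) q(1) bij_betw_trans by blast
  ultimately show ?thesis unfolding peq_def by blast
qed

lemma peq_codes_equiv: assumes "peq N A B" "A \<subseteq> F N" shows "codes_equiv N A B"
proof -
  obtain p where p: "bij_betw p {..<N} {..<N}" "B = pmap p N ` A" using assms(1) peq_def by blast
  have "pmap p N c = map (\<lambda>i. vadd (zerov N) c ! p i) [0..<N]" if "c \<in> A" for c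
  proof -
    have "vadd (zerov N) c = c" using that assms(2) by (auto simp: F_def)
    then show ?thesis by (simp add: pmap_def)
  qed
  then have "pmap p N ` A = (\<lambda>c. map (\<lambda>i. vadd (zerov N) c ! p i) [0..<N]) ` A"
    by (rule image_cong[OF refl])
  moreover have "zerov N \<in> F N" by (simp add: F_def)
  ultimately show ?thesis unfolding codes_equiv_def using p
    by (intro exI[of _ "zerov N"] exI[of _ p]) simp
qed

lemma wt_pmap: assumes "bij_betw p {..<N} {..<N}" "length c = N" shows "wt (pmap p N c) = wt c"
proof -
  have e1: "{i. i < length (pmap p N c) \<and> pmap p N c ! i} = {i. i < N \<and> c ! p i}" by auto
  have inj: "inj_on p {i. i < N \<and> c ! p i}"
    using assms(1) unfolding bij_betw_def by (rule conjE) (erule inj_on_subset, auto)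
  have e2: "p ` {i. i < N \<and> c ! p i} = {i. i < N \<and> c ! i}"
  proof
    show "p ` {i. i < N \<and> c ! p i} \<subseteq> {i. i < N \<and> c ! i}" using assms(1) bij_betwE by fastforce
    show "{i. i < N \<and> c ! i} \<subseteq> p ` {i. i < N \<and> c ! p i}"
    proof
      fix i assume i: "i \<in> {i. i < N \<and> c ! i}"
      then have "i \<in> p ` {..<N}" using assms(1) by (simp add: bij_betw_def)
      then obtain j where "j < N" "i = p j" by auto
      then show "i \<in> p ` {i. i < N \<and> c ! p i}" using i by auto
    qed
  qed
  have "wt (pmap p N c) = card {i. i < N \<and> c ! p i}" unfolding wt_card e1 ..
  also have "\<dots> = card (p ` {i. i < N \<and> c ! p i})" using card_image[OF inj] by simp
  also have "\<dots> = wt c" unfolding e2 wt_card assms(2) ..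
  finally show ?thesis .
qed

lemma par_pmap: "bij_betw p {..<N} {..<N} \<Longrightarrow> length c = N \<Longrightarrow> par (pmap p N c) = par c"
  by (simp add: par_def wt_pmap)

lemma pmap_vadd: "\<forall>i<N. p i < N \<Longrightarrow> length x = N \<Longrightarrow> length y = N \<Longrightarrow>
   pmap p N (vadd x y) = vadd (pmap p N x) (pmap p N y)"
  by (rule nth_equalityI) auto

definition ext2 :: "nat \<Rightarrow> (nat \<Rightarrow> nat) \<Rightarrow> nat \<Rightarrow> nat" where
  "ext2 m p i = (if i < m then p i else if i = m then m else m + 1 + p (i - m - 1))"

lemma pmap_ext2: assumes lt: "\<forall>i<m. p i < m" and lu: "length u = m" and lv: "length v = m"
  shows "pmap (ext2 m p) (2*m+1) (u @ [b] @ v) = pmap p m u @ [b] @ pmap p m v"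
proof (rule nth_equalityI)
  show "length (pmap (ext2 m p) (2*m+1) (u @ [b] @ v)) = length (pmap p m u @ [b] @ pmap p m v)" by simp
  fix i assume "i < length (pmap (ext2 m p) (2*m+1) (u @ [b] @ v))"
  then have i: "i < 2*m+1" by simp
  consider "i < m" | "i = m" | "m < i" by linarith
  then show "pmap (ext2 m p) (2*m+1) (u @ [b] @ v) ! i = (pmap p m u @ [b] @ pmap p m v) ! i"
  proof cases
    case 1 then show ?thesis using i lt lu by (simp add: ext2_def nth_append)
  next
    case 2 then show ?thesis using i lt lu by (simp add: ext2_def nth_append)
  next
    case 3
    define k where "k = i - m - 1"
    have k: "i = m + 1 + k" "k < m" using 3 i unfolding k_def by linarith+
    then show ?thesis using lt lu lv by (simp add: ext2_def nth_append)
  qed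
qed

lemma ext2_lt: "\<forall>i<m. p i < m \<Longrightarrow> i < 2*m+1 \<Longrightarrow> ext2 m p i < 2*m+1"
  by (auto simp: ext2_def)

lemma ext2_inv: assumes "\<forall>i<m. q (p i) = i \<and> p i < m" "i < 2*m+1"
  shows "ext2 m q (ext2 m p i) = i"
proof -
  consider "i < m" | "i = m" | "m < i" by linarith
  then show ?thesis
  proof cases
    case 3
    define k where "k = i - m - 1"
    have k: "i = m + 1 + k" "k < m" using 3 assms(2) unfolding k_def by linarith+
    then show ?thesis using assms(1) by (simp add: ext2_def)
  qed (use assms in \<open>auto simp: ext2_def\<close>)
qed

lemma bij_ext2: assumes "bij_betw p {..<m} {..<m}" shows "bij_betw (ext2 m p) {..<2*m+1} {..<2*m+1}"
proof -
  define q where "q = inv_into {..<m} p"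
  have bq: "bij_betw q {..<m} {..<m}" using assms bij_betw_inv_into q_def by blast
  have h1: "\<forall>i<m. q (p i) = i \<and> p i < m"
    using assms bij_betwE bij_betw_inv_into_left q_def by fastforce
  have h2: "\<forall>i<m. p (q i) = i \<and> q i < m"
    using assms bq bij_betwE bij_betw_inv_into_right q_def by fastforce
  show ?thesis
    apply (rule bij_betw_byWitness[where f'="ext2 m q"])
    using ext2_inv[OF h1] ext2_inv[OF h2] ext2_lt h1 h2 by auto
qed


lemma vadd_append_Cons[simp]: "length a = length p \<Longrightarrow> vadd (a @ b # c) (p @ q # r) = vadd a p @ (b \<noteq> q) # vadd c r"
  by (simp add: vadd_def)

definition swp :: "nat \<Rightarrow> nat \<Rightarrow> nat" where
  "swp m i = (if i < m then i else if i = m then 2*m+1 else if i < 2*m+1 then i + m + 1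
     else if i = 2*m+1 then m else if i < 3*m+2 then i - (m+1) else i)"

lemma swp_lt: "i < 4*m+3 \<Longrightarrow> swp m i < 4*m+3" unfolding swp_def by (auto split: if_splits)
lemma swp_inv: "i < 4*m+3 \<Longrightarrow> swp m (swp m i) = i" unfolding swp_def by (auto split: if_splits)

lemma bij_swp: "bij_betw (swp m) {..<4*m+3} {..<4*m+3}"
  by (rule bij_betw_byWitness[where f'="swp m"]) (auto simp: swp_lt swp_inv)

lemma pmap_swp: assumes "length p1 = m" "length p3 = m" "length p5 = m" "length p7 = m"
  shows "pmap (swp m) (4*m+3) (p1 @ p2 # p3 @ p4 # p5 @ p6 # p7) = p1 @ p4 # p5 @ p2 # p3 @ p6 # p7"
proof (rule nth_equalityI)
  show "length (pmap (swp m) (4*m+3) (p1 @ p2 # p3 @ p4 # p5 @ p6 # p7)) = length (p1 @ p4 # p5 @ p2 # p3 @ p6 # p7)"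
    using assms by simp
  fix i assume "i < length (pmap (swp m) (4*m+3) (p1 @ p2 # p3 @ p4 # p5 @ p6 # p7))"
  then have i: "i < 4*m+3" by simp
  consider "i < m" | "i = m" | "m < i \<and> i < 2*m+1" | "i = 2*m+1" | "2*m+1 < i \<and> i < 3*m+2" | "i = 3*m+2" | "3*m+3 \<le> i"
    by linarith
  then show "pmap (swp m) (4*m+3) (p1 @ p2 # p3 @ p4 # p5 @ p6 # p7) ! i = (p1 @ p4 # p5 @ p2 # p3 @ p6 # p7) ! i"
  proof cases
    case 1 then show ?thesis using i assms by (simp add: swp_def nth_append)
  next
    case 2 then show ?thesis using i assms by (simp add: swp_def nth_append)
  next
    case 3
    define k where "k = i - m - 1"
    have k: "i = m + 1 + k" "k < m" using 3 unfolding k_def by linarith+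
    show ?thesis using assms k by (simp add: swp_def nth_append)
  next
    case 4 then show ?thesis using i assms by (simp add: swp_def nth_append)
  next
    case 5
    define k where "k = i - 2*m - 2"
    have k: "i = 2*m + 2 + k" "k < m" using 5 unfolding k_def by linarith+
    show ?thesis using assms k by (simp add: swp_def nth_append)
  next
    case 6 then show ?thesis using i assms by (simp add: swp_def nth_append)
  next
    case 7
    define k where "k = i - 3*m - 3"
    have k: "i = 3*m + 3 + k" "k < m" using 7 i unfolding k_def by linarith+
    show ?thesis using assms k by (simp add: swp_def nth_append)
  qed
qed

lemma calc:
  assumes la: "length a = m" and lc: "length c = m" and lu: "length u = m" and ly: "length y = m"
  shows "pmap (swp m) (4*m+3) (vadd (a @ b # c) (vadd u y @ (par u \<noteq> l y) # u) @ par (a @ b # c) # a @ b # c)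
    = vadd (vadd c u @ b # c) (vadd (vadd a c) y @ par (vadd a c) # vadd a c)
        @ (par (vadd c u @ b # c) \<noteq> l y) # vadd c u @ b # c"
proof -
  have L: "vadd (a @ b # c) (vadd u y @ (par u \<noteq> l y) # u) @ par (a @ b # c) # a @ b # c
     = vadd a (vadd u y) @ (b \<noteq> (par u \<noteq> l y)) # vadd c u @ par (a @ b # c) # a @ b # c"
    using assms by simp
  have R: "vadd (vadd c u @ b # c) (vadd (vadd a c) y @ par (vadd a c) # vadd a c)
        @ (par (vadd c u @ b # c) \<noteq> l y) # vadd c u @ b # c
     = vadd (vadd c u) (vadd (vadd a c) y) @ (b \<noteq> par (vadd a c)) # vadd c (vadd a c)
        @ (par (vadd c u @ b # c) \<noteq> l y) # vadd c u @ b # c"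
    using assms by simp
  have e1: "vadd (vadd c u) (vadd (vadd a c) y) = vadd a (vadd u y)"
    using assms by (intro nth_equalityI) auto
  have e2: "vadd c (vadd a c) = a" using assms by (intro nth_equalityI) auto
  have e3: "par (vadd a c) = (par a \<noteq> par c)" using assms par_vadd by simp
  have e4: "par (vadd c u) = (par c \<noteq> par u)" using assms par_vadd by simp
  show ?thesis unfolding L R e1 e2 e3
    using assms by (simp add: pmap_swp e4 e1 e2) (cases b; cases "par a"; cases "par c"; cases "par u"; cases "l y"; simp)
qed

lemma decomp: "length X = 2*m+1 \<Longrightarrow> \<exists>a b c. X = a @ b # c \<and> length a = m \<and> length c = m"
  by (rule exI[of _ "take m X"], rule exI[of _ "X ! m"], rule exI[of _ "drop (Suc m) X"])
     (simp add: id_take_nth_drop[symmetric])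

lemma key:
  assumes HF: "H \<subseteq> F m"
    and lam: "\<And>v y. v \<in> F m \<Longrightarrow> y \<in> H \<Longrightarrow> l' (vadd v y @ [par v] @ v) = l y"
  shows "pmap (swp m) (4*m+3) ` double (2*m+1) (Vcode m H l) = Vcode (2*m+1) (double m H) l'"
proof
  show "pmap (swp m) (4*m+3) ` double (2*m+1) (Vcode m H l) \<subseteq> Vcode (2*m+1) (double m H) l'"
  proof
    fix w assume "w \<in> pmap (swp m) (4*m+3) ` double (2*m+1) (Vcode m H l)"
    then obtain X w0 where X: "X \<in> F (2*m+1)" "w0 \<in> Vcode m H l"
      and w: "w = pmap (swp m) (4*m+3) (vadd X w0 @ [par X] @ X)"
      unfolding double_def by blast
    obtain u y where u: "u \<in> F m" "y \<in> H" and w0: "w0 = vadd u y @ [par u \<noteq> l y] @ u"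
      using X(2) unfolding Vcode_def by blast
    obtain a b c where abc: "X = a @ b # c" "length a = m" "length c = m"
      using X(1) decomp unfolding F_def by blast
    have ly: "length y = m" using u HF F_def by auto
    have lu: "length u = m" using u F_def by auto
    have w': "w = vadd (vadd c u @ b # c) (vadd (vadd a c) y @ par (vadd a c) # vadd a c)
        @ (par (vadd c u @ b # c) \<noteq> l y) # vadd c u @ b # c"
      using calc[OF abc(2) abc(3) lu ly, of b l] w w0 abc(1) by simp
    have y': "vadd (vadd a c) y @ par (vadd a c) # vadd a c \<in> double m H"
      unfolding double_def using u abc ly by (intro CollectI exI[of _ "vadd a c"] exI[of _ y]) (auto simp: F_def)
    have ll: "l' (vadd (vadd a c) y @ par (vadd a c) # vadd a c) = l y"
      using lam[of "vadd a c" y] u abc by (simp add: F_def)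
    have X': "vadd c u @ b # c \<in> F (2*m+1)" using abc lu by (simp add: F_def)
    show "w \<in> Vcode (2*m+1) (double m H) l'"
      unfolding Vcode_def using X' y' ll w' by fastforce
  qed
next
  show "Vcode (2*m+1) (double m H) l' \<subseteq> pmap (swp m) (4*m+3) ` double (2*m+1) (Vcode m H l)"
  proof
    fix w assume "w \<in> Vcode (2*m+1) (double m H) l'"
    then obtain X y' where X: "X \<in> F (2*m+1)" "y' \<in> double m H"
      and w: "w = vadd X y' @ [par X \<noteq> l' y'] @ X"
      unfolding Vcode_def by blast
    obtain v y where v: "v \<in> F m" "y \<in> H" and y': "y' = vadd v y @ [par v] @ v"
      using X(2) unfolding double_def by blast
    obtain a' b c where abc: "X = a' @ b # c" "length a' = m" "length c = m"
      using X(1) decomp unfolding F_def by blast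
    have ly: "length y = m" using v HF F_def by auto
    have lv: "length v = m" using v F_def by auto
    define a where "a = vadd v c"
    define u where "u = vadd a' c"
    have la: "length a = m" "length u = m" using abc lv unfolding a_def u_def by auto
    have e1: "vadd c u = a'" unfolding u_def using abc by (intro nth_equalityI) auto
    have e2: "vadd a c = v" unfolding a_def using abc lv by (intro nth_equalityI) auto
    have ll: "l' y' = l y" using lam v y' by simp
    have "w = pmap (swp m) (4*m+3) (vadd (a @ b # c) (vadd u y @ (par u \<noteq> l y) # u) @ par (a @ b # c) # a @ b # c)"
      using calc[OF la(1) abc(3) la(2) ly, of b l] unfolding e1 e2 using w y' abc ll by simp
    moreover have "vadd u y @ (par u \<noteq> l y) # u \<in> Vcode m H l"
      unfolding Vcode_def using la v by (auto simp: F_def)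
    moreover have "a @ b # c \<in> F (2*m+1)" using la abc by (simp add: F_def)
    ultimately show "w \<in> pmap (swp m) (4*m+3) ` double (2*m+1) (Vcode m H l)"
      unfolding double_def by fastforce
  qed
qed


lemma hlen_Suc: "hlen n (Suc j) = 2 * hlen n j + 1"
proof -
  define P where "P = 2 ^ j * (n + 1)"
  have "0 < P" unfolding P_def by simp
  moreover have "hlen n (Suc j) = 2 * P - 1" "hlen n j = P - 1" unfolding hlen_def P_def by simp_all
  ultimately show ?thesis by linarith
qed

lemma zerov_Suc[simp]: "zerov (Suc m) = False # zerov m" by (simp add: zerov_def)

lemma double_F: "C \<subseteq> F m \<Longrightarrow> double m C \<subseteq> F (2*m+1)"
  unfolding double_def F_def by auto

lemma Vcode_F: "H \<subseteq> F m \<Longrightarrow> Vcode m H l \<subseteq> F (2*m+1)"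
  unfolding Vcode_def F_def by auto

lemma hamH_F: "H \<subseteq> F n \<Longrightarrow> hamH n H j \<subseteq> F (hlen n j)"
proof (induction j)
  case 0 then show ?case by (simp add: hlen_def)
next
  case (Suc j) then show ?case using double_F[OF Suc.IH] hlen_Suc[of n j] by simp
qed

lemma Cseq_F: "H \<subseteq> F n \<Longrightarrow> Cseq n H l s \<subseteq> F (hlen n (Suc s))"
proof (induction s)
  case 0 then show ?case using Vcode_F[of H n l] by (simp add: hlen_Suc hlen_def[of n 0])
next
  case (Suc s) then show ?case using double_F[of "Cseq n H l s" "hlen n (Suc s)"] by (simp add: hlen_Suc[of n "Suc s"])
qed

lemma lam_step:
  assumes HF: "hamH n H j \<subseteq> F (hlen n j)" and v: "v \<in> F (hlen n j)" and y: "y \<in> hamH n H j"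
  shows "lamseq n H l (Suc j) (vadd v y @ [par v] @ v) = lamseq n H l j y"
proof -
  let ?M = "hlen n j"
  have lv: "length v = ?M" using v F_def by auto
  have ly: "length y = ?M" using y HF F_def by auto
  have "(THE y'. y' \<in> hamH n H j \<and>
         (\<exists>x \<in> F ?M. vadd v y @ [par v] @ v = vadd (y' @ zerov (?M + 1)) (x @ [par x] @ x))) = y"
  proof (rule the_equality)
    have "vadd v y @ [par v] @ v = vadd (y @ zerov (?M + 1)) (v @ [par v] @ v)"
      using lv ly by (simp add: vadd_comm[of y v])
    then show "y \<in> hamH n H j \<and>
         (\<exists>x \<in> F ?M. vadd v y @ [par v] @ v = vadd (y @ zerov (?M + 1)) (x @ [par x] @ x))"
      using y v by blast
  next
    fix y' assume h: "y' \<in> hamH n H j \<and>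
         (\<exists>x \<in> F ?M. vadd v y @ [par v] @ v = vadd (y' @ zerov (?M + 1)) (x @ [par x] @ x))"
    then obtain x where x: "x \<in> F ?M" and eq: "vadd v y @ [par v] @ v = vadd (y' @ zerov (?M + 1)) (x @ [par x] @ x)"
      by blast
    have ly': "length y' = ?M" using h HF F_def by auto
    have lx: "length x = ?M" using x F_def by auto
    have "vadd (y' @ zerov (?M + 1)) (x @ [par x] @ x) = vadd y' x @ [par x] @ x"
      using lx ly' by simp
    with eq have e: "vadd v y @ ([par v] @ v) = vadd y' x @ ([par x] @ x)" by simp
    have "vadd v y = vadd y' x \<and> [par v] @ v = [par x] @ x"
      using append_eq_append_conv[of "vadd v y" "vadd y' x" "[par v] @ v" "[par x] @ x"] e lv ly lx ly' by auto
    then have "v = x" "vadd v y = vadd y' x" by auto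
    then show "y' = y" using lv ly lx ly' by (metis vadd_cancel1 vadd_comm)
  qed
  then show ?thesis by simp
qed

lemma peq_double: assumes AF: "A \<subseteq> F m" and pe: "peq m A B"
  shows "peq (2*m+1) (double m A) (double m B)"
proof -
  obtain p where p: "bij_betw p {..<m} {..<m}" and B: "B = pmap p m ` A" using pe peq_def by blast
  have lt: "\<forall>i<m. p i < m" using p bij_betwE by blast
  define q where "q = inv_into {..<m} p"
  have bq: "bij_betw q {..<m} {..<m}" unfolding q_def by (rule bij_betw_inv_into[OF p])
  have hq1: "\<forall>i<m. q (p i) = i" using bij_betw_inv_into_left[OF p] q_def by simp
  have hq2: "\<forall>i<m. q i < m" using bij_betwE[OF bq] by blast
  have "double m B = pmap (ext2 m p) (2*m+1) ` double m A"
  proof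
    show "double m B \<subseteq> pmap (ext2 m p) (2*m+1) ` double m A"
    proof
      fix w assume "w \<in> double m B"
      then obtain x b where x: "x \<in> F m" "b \<in> B" and w: "w = vadd x b @ [par x] @ x"
        unfolding double_def by blast
      obtain a where a: "a \<in> A" "b = pmap p m a" using x(2) B by blast
      have la: "length a = m" using a AF F_def by auto
      have lx: "length x = m" using x F_def by auto
      define x0 where "x0 = pmap q m x"
      have lx0: "length x0 = m" unfolding x0_def by simp
      have px0: "pmap p m x0 = x" unfolding x0_def using hq1 lt lx by (intro nth_equalityI) auto
      have parx: "par x0 = par x" using par_pmap[OF p lx0] px0 by simp
      have e1: "pmap (ext2 m p) (2*m+1) (vadd x0 a @ [par x0] @ x0) = pmap p m (vadd x0 a) @ [par x0] @ pmap p m x0"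
        by (rule pmap_ext2[OF lt]) (simp_all add: la lx0)
      have e2: "pmap p m (vadd x0 a) = vadd x b" using pmap_vadd[OF lt lx0 la] px0 a(2) by simp
      have "pmap (ext2 m p) (2*m+1) (vadd x0 a @ [par x0] @ x0) = pmap p m (vadd x0 a) @ [par x0] @ pmap p m x0"
        by (rule e1)
      also have "\<dots> = w" unfolding e2 px0 parx w ..
      finally have "pmap (ext2 m p) (2*m+1) (vadd x0 a @ [par x0] @ x0) = w" .
      moreover have "vadd x0 a @ [par x0] @ x0 \<in> double m A"
        unfolding double_def using a lx0 by (intro CollectI exI[of _ x0] exI[of _ a]) (simp add: F_def)
      ultimately show "w \<in> pmap (ext2 m p) (2*m+1) ` double m A" by (rule image_eqI[OF sym])
    qed
  next
    show "pmap (ext2 m p) (2*m+1) ` double m A \<subseteq> double m B"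
    proof
      fix w assume "w \<in> pmap (ext2 m p) (2*m+1) ` double m A"
      then obtain x a where x: "x \<in> F m" "a \<in> A" and w: "w = pmap (ext2 m p) (2*m+1) (vadd x a @ [par x] @ x)"
        unfolding double_def by blast
      have la: "length a = m" using x AF F_def by auto
      have lx: "length x = m" using x F_def by auto
      have e1: "pmap (ext2 m p) (2*m+1) (vadd x a @ [par x] @ x) = pmap p m (vadd x a) @ [par x] @ pmap p m x"
        by (rule pmap_ext2[OF lt]) (simp_all add: la lx)
      have e2: "pmap p m (vadd x a) = vadd (pmap p m x) (pmap p m a)" by (rule pmap_vadd[OF lt lx la])
      have e3: "par x = par (pmap p m x)" using par_pmap[OF p lx] by simp
      have "w = pmap p m (vadd x a) @ [par x] @ pmap p m x" unfolding w e1 ..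
      also have "\<dots> = vadd (pmap p m x) (pmap p m a) @ [par (pmap p m x)] @ pmap p m x"
        unfolding e2 e3 ..
      finally have "w = vadd (pmap p m x) (pmap p m a) @ [par (pmap p m x)] @ pmap p m x" .
      moreover have "pmap p m a \<in> B" using B x by blast
      moreover have "pmap p m x \<in> F m" by (simp add: F_def)
      ultimately show "w \<in> double m B" unfolding double_def by blast
    qed
  qed
  then show ?thesis unfolding peq_def using bij_ext2[OF p] by blast
qed

lemma part1:
  assumes HF: "H \<subseteq> F n"
  shows "peq (hlen n (Suc s)) (Cseq n H l s) (Vcode (hlen n s) (hamH n H s) (lamseq n H l s))"
proof (induction s)
  case 0
  show ?case using peq_refl[OF Vcode_F[OF HF, of l]] by (simp add: hlen_Suc hlen_def[of n 0])
next
  case (Suc s)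
  let ?M = "hlen n s"
  have M': "hlen n (Suc s) = 2 * ?M + 1" by (rule hlen_Suc)
  have M'': "hlen n (Suc (Suc s)) = 4 * ?M + 3" using hlen_Suc[of n "Suc s"] M' by simp
  have HsF: "hamH n H s \<subseteq> F ?M" using hamH_F[OF HF] .
  have p1: "peq (hlen n (Suc (Suc s))) (Cseq n H l (Suc s))
      (double (hlen n (Suc s)) (Vcode ?M (hamH n H s) (lamseq n H l s)))"
    using peq_double[OF Cseq_F[OF HF] Suc.IH] hlen_Suc[of n "Suc s"] by simp
  have k: "pmap (swp ?M) (4*?M+3) ` double (2*?M+1) (Vcode ?M (hamH n H s) (lamseq n H l s))
      = Vcode (2*?M+1) (double ?M (hamH n H s)) (lamseq n H l (Suc s))"
    by (rule key[OF HsF]) (rule lam_step[OF HsF])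
  have p2: "peq (hlen n (Suc (Suc s))) (double (hlen n (Suc s)) (Vcode ?M (hamH n H s) (lamseq n H l s)))
      (Vcode (hlen n (Suc s)) (hamH n H (Suc s)) (lamseq n H l (Suc s)))"
    unfolding M'' M' peq_def using k bij_swp by auto
  show ?case using peq_trans[OF p1 p2] .
qed


declare zerov_Suc[simp del]

lemma zerov_split: "zerov (2*m+1) = zerov m @ False # zerov m"
proof -
  have "2*m+1 = m + Suc m" by simp
  then show ?thesis unfolding zerov_def by (simp only: replicate_add replicate_Suc)
qed

lemma hamH_zero: "zerov n \<in> H \<Longrightarrow> zerov (hlen n j) \<in> hamH n H j"
proof (induction j)
  case 0 then show ?case by (simp add: hlen_def)
next
  case (Suc j)
  have "zerov (hlen n (Suc j)) = vadd (zerov (hlen n j)) (zerov (hlen n j)) @ [par (zerov (hlen n j))] @ zerov (hlen n j)"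
    unfolding hlen_Suc zerov_split by simp
  then show ?case using Suc unfolding hamH.simps double_def
    by (intro CollectI exI[of _ "zerov (hlen n j)"] exI[of _ "zerov (hlen n j)"]) (simp add: F_def)
qed

lemma hamH_closed:
  assumes HF: "H \<subseteq> F n" and cl: "\<forall>x\<in>H. \<forall>y\<in>H. vadd x y \<in> H"
  shows "\<forall>x\<in>hamH n H j. \<forall>y\<in>hamH n H j. vadd x y \<in> hamH n H j"
proof (induction j)
  case 0 then show ?case using cl by simp
next
  case (Suc j)
  let ?M = "hlen n j"
  have HsF: "hamH n H j \<subseteq> F ?M" by (rule hamH_F[OF HF])
  show ?case
  proof (intro ballI)
    fix w1 w2 assume "w1 \<in> hamH n H (Suc j)" "w2 \<in> hamH n H (Suc j)"
    then obtain x1 y1 x2 y2 where h: "x1 \<in> F ?M" "y1 \<in> hamH n H j" "w1 = vadd x1 y1 @ [par x1] @ x1"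
      "x2 \<in> F ?M" "y2 \<in> hamH n H j" "w2 = vadd x2 y2 @ [par x2] @ x2"
      unfolding hamH.simps double_def by blast
    have l: "length x1 = ?M" "length x2 = ?M" "length y1 = ?M" "length y2 = ?M"
      using h HsF F_def by auto
    have "vadd w1 w2 = vadd (vadd x1 x2) (vadd y1 y2) @ [par (vadd x1 x2)] @ vadd x1 x2"
      unfolding h(3) h(6) using l
      by (simp add: par_vadd) (intro nth_equalityI, auto)
    moreover have "vadd y1 y2 \<in> hamH n H j" using Suc h by blast
    moreover have "vadd x1 x2 \<in> F ?M" using l by (simp add: F_def)
    ultimately show "vadd w1 w2 \<in> hamH n H (Suc j)" unfolding hamH.simps double_def by blast
  qed
qed

lemma span_F: assumes "S \<subseteq> F m" shows "c \<in> gf2span m S \<Longrightarrow> c \<in> F m"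
  by (induction rule: gf2span.induct) (use assms in \<open>auto simp: F_def\<close>)

lemma span_sub: assumes "S \<subseteq> C" "zerov m \<in> C" "\<forall>x\<in>C. \<forall>y\<in>C. vadd x y \<in> C"
  shows "c \<in> gf2span m S \<Longrightarrow> c \<in> C"
  by (induction rule: gf2span.induct) (use assms in auto)

lemma lift_j:
  assumes HsF: "Hs \<subseteq> F M" and jj: "jj < M"
  shows "c \<in> gf2span M {t \<in> Hs. wt t = 3 \<and> t ! jj} \<Longrightarrow>
    c @ False # zerov M \<in> gf2span (2*M+1) {w \<in> double M Hs. wt w = 3 \<and> w ! jj}"
proof (induction rule: gf2span.induct)
  case zero
  show ?case unfolding zerov_split[symmetric] by (rule gf2span.zero)
next
  case (base t)
  have lt: "length t = M" using base HsF F_def by auto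
  have "t @ False # zerov M \<in> double M Hs"
    unfolding double_def using base lt
    by (intro CollectI exI[of _ "zerov M"] exI[of _ t]) (simp add: F_def)
  moreover have "wt (t @ False # zerov M) = 3" using base by (simp add: wt_def zerov_def)
  moreover have "(t @ False # zerov M) ! jj" using base lt jj by (simp add: nth_append)
  ultimately show ?case by (intro gf2span.base) simp
next
  case (add x y)
  have Ssub: "{t \<in> Hs. wt t = 3 \<and> t ! jj} \<subseteq> F M" using HsF by blast
  have lc: "length x = M" "length y = M"
    using span_F[OF Ssub add.hyps(1)] span_F[OF Ssub add.hyps(2)] unfolding F_def by simp_all
  have eq: "vadd (x @ False # zerov M) (y @ False # zerov M) = vadd x y @ False # zerov M"
  proof -
    have "vadd (x @ False # zerov M) (y @ False # zerov M) = vadd x y @ (False \<noteq> False) # vadd (zerov M) (zerov M)"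
      by (rule vadd_append_Cons) (simp add: lc)
    also have "\<dots> = vadd x y @ False # zerov M" by simp
    finally show ?thesis .
  qed
  show ?case unfolding eq[symmetric] by (rule gf2span.add[OF add.IH])
qed

lemma wt_update_false: assumes "b < length t" "t ! b" shows "wt (t[b := False]) = wt t - 1"
proof -
  have "{i. i < length t \<and> t[b := False] ! i} = {i. i < length t \<and> t ! i} - {b}"
    by (rule set_eqI, case_tac "x = b") auto
  moreover have "b \<in> {i. i < length t \<and> t ! i}" using assms by simp
  ultimately show ?thesis by (simp add: wt_card)
qed

lemma lift_k:
  assumes HsF: "Hs \<subseteq> F M" and kk: "kk < M"
  shows "c \<in> gf2span M {t \<in> Hs. wt t = 3 \<and> t ! kk} \<Longrightarrow>
    \<exists>x\<in>F M. vadd x c @ [par x] @ x \<in> gf2span (2*M+1) {w \<in> double M Hs. wt w = 3 \<and> w ! (M + 1 + kk)}"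
proof (induction rule: gf2span.induct)
  case zero
  have "vadd (zerov M) (zerov M) @ [par (zerov M)] @ zerov M = zerov (2*M+1)"
    using zerov_split by simp
  then show ?case using gf2span.zero by (intro bexI[of _ "zerov M"]) (auto simp: F_def)
next
  case (base t)
  have lt: "length t = M" using base HsF F_def by auto
  have "{i. i < length t \<and> t ! i} - {kk} \<noteq> {}"
  proof
    assume "{i. i < length t \<and> t ! i} - {kk} = {}"
    then have "{i. i < length t \<and> t ! i} \<subseteq> {kk}" by blast
    then have "card {i. i < length t \<and> t ! i} \<le> card {kk}" by (intro card_mono) simp_all
    then have "card {i. i < length t \<and> t ! i} \<le> 1" by simp
    then show False using base by (simp add: wt_card)
  qed
  then obtain b where b: "b < M" "t ! b" "b \<noteq> kk" using lt by blast
  define x where "x = t[b := False]"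
  have lx: "length x = M" using lt x_def by simp
  have wx: "wt x = 2" unfolding x_def using wt_update_false[of b t] b lt base by simp
  have px: "par x = False" using wx by (simp add: par_def)
  have "{i. i < length (vadd x t) \<and> vadd x t ! i} = {b}"
    using b lt lx unfolding x_def by (auto simp: nth_list_update split: if_splits)
  then have wxt: "wt (vadd x t) = 1" by (simp add: wt_card)
  have xk: "x ! kk" using b base kk lt unfolding x_def by simp
  let ?w = "vadd x t @ [par x] @ x"
  have "?w \<in> double M Hs" unfolding double_def using base lx
    by (intro CollectI exI[of _ x] exI[of _ t]) (simp add: F_def)
  moreover have "wt ?w = 3" using wxt wx px by (simp add: wt_def)
  moreover have "?w ! (M + 1 + kk)" using xk lx lt by (simp add: nth_append)
  ultimately have "?w \<in> gf2span (2*M+1) {w \<in> double M Hs. wt w = 3 \<and> w ! (M + 1 + kk)}"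
    by (intro gf2span.base) simp
  moreover have "x \<in> F M" using lx F_def by simp
  ultimately show ?case by blast
next
  case (add c1 c2)
  obtain x1 where x1: "x1 \<in> F M" "vadd x1 c1 @ [par x1] @ x1 \<in> gf2span (2*M+1) {w \<in> double M Hs. wt w = 3 \<and> w ! (M + 1 + kk)}"
    using add.IH(1) by blast
  obtain x2 where x2: "x2 \<in> F M" "vadd x2 c2 @ [par x2] @ x2 \<in> gf2span (2*M+1) {w \<in> double M Hs. wt w = 3 \<and> w ! (M + 1 + kk)}"
    using add.IH(2) by blast
  have Ssub: "{t \<in> Hs. wt t = 3 \<and> t ! kk} \<subseteq> F M" using HsF by blast
  have lc: "length c1 = M" "length c2 = M"
    using span_F[OF Ssub add.hyps(1)] span_F[OF Ssub add.hyps(2)] unfolding F_def by simp_all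
  have lx: "length x1 = M" "length x2 = M" using x1(1) x2(1) unfolding F_def by simp_all
  have e1: "vadd (vadd x1 c1) (vadd x2 c2) = vadd (vadd x1 x2) (vadd c1 c2)"
    using lc lx by (intro nth_equalityI) auto
  have e2: "par (vadd x1 x2) = (par x1 \<noteq> par x2)" using lx par_vadd by simp
  have eq: "vadd (vadd x1 c1 @ [par x1] @ x1) (vadd x2 c2 @ [par x2] @ x2)
     = vadd (vadd x1 x2) (vadd c1 c2) @ [par (vadd x1 x2)] @ vadd x1 x2"
  proof -
    have "vadd (vadd x1 c1 @ [par x1] @ x1) (vadd x2 c2 @ [par x2] @ x2)
       = vadd (vadd x1 c1) (vadd x2 c2) @ (par x1 \<noteq> par x2) # vadd x1 x2"
      unfolding append_Cons append_Nil by (rule vadd_append_Cons) (simp add: lc lx)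
    then show ?thesis unfolding e1 e2 append_Cons append_Nil .
  qed
  have mem: "vadd (vadd x1 x2) (vadd c1 c2) @ [par (vadd x1 x2)] @ vadd x1 x2
      \<in> gf2span (2*M+1) {w \<in> double M Hs. wt w = 3 \<and> w ! (M + 1 + kk)}"
    unfolding eq[symmetric] by (rule gf2span.add[OF x1(2) x2(2)])
  have xF: "vadd x1 x2 \<in> F M" using lx by (simp add: F_def)
  show ?case by (rule bexI[where x="vadd x1 x2"]) (rule mem, rule xF)
qed


lemma pierce_transfer: assumes "pierces R mu" "\<And>c. c \<in> R \<Longrightarrow> \<exists>w\<in>R'. mu' w = mu c"
  shows "pierces R' mu'"
proof -
  obtain c0 c1 where "c0 \<in> R" "mu c0 = False" "c1 \<in> R" "mu c1 = True" using assms(1) pierces_def by blast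
  then show ?thesis using assms(2)[of c0] assms(2)[of c1] unfolding pierces_def by metis
qed

theorem lemma5:
  fixes n k s :: nat and H :: "vec set" and l :: "vec \<Rightarrow> bool"
  assumes "n = 2 ^ k - 1"
    and "is_hamming_code n H"
    and "l (zerov n) = False"
  defines "N \<equiv> 2 ^ (s + 1) * (n + 1) - 1"
  shows "codes_equiv N (Cseq n H l s) (Vcode ((N - 1) div 2) (hamH n H s) (lamseq n H l s))
     \<and> (\<forall>j. 1 \<le> j \<and> j \<le> (N - 1) div 2 \<longrightarrow>
          pierces (component ((N - 1) div 2) (hamH n H s) j) (lamseq n H l s) \<longrightarrow>
            pierces (component N (hamH n H (Suc s)) j) (lamseq n H l (Suc s)) \<and>
            pierces (component N (hamH n H (Suc s)) (j + (N + 1) div 2)) (lamseq n H l (Suc s)))"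
proof -
  have HF: "H \<subseteq> F n" and H0: "zerov n \<in> H" and Hcl: "\<forall>x\<in>H. \<forall>y\<in>H. vadd x y \<in> H"
    using assms(2) unfolding is_hamming_code_def by blast+
  let ?M = "hlen n s"
  have NM: "N = hlen n (Suc s)" unfolding N_def hlen_def by simp
  have N2: "N = 2 * ?M + 1" unfolding NM by (rule hlen_Suc)
  have d1: "(N - 1) div 2 = ?M" using N2 by simp
  have d2: "(N + 1) div 2 = ?M + 1" using N2 by simp
  have HsF: "hamH n H s \<subseteq> F ?M" by (rule hamH_F[OF HF])
  have Hs0: "zerov ?M \<in> hamH n H s" by (rule hamH_zero[OF H0])
  have Hscl: "\<forall>x\<in>hamH n H s. \<forall>y\<in>hamH n H s. vadd x y \<in> hamH n H s" by (rule hamH_closed[OF HF Hcl])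
  have P1: "codes_equiv N (Cseq n H l s) (Vcode ((N - 1) div 2) (hamH n H s) (lamseq n H l s))"
  proof -
    have d1': "(hlen n (Suc s) - 1) div 2 = ?M" using d1 NM by simp
    show ?thesis unfolding NM d1' by (rule peq_codes_equiv[OF part1[OF HF] Cseq_F[OF HF]])
  qed
  have P2: "pierces (component N (hamH n H (Suc s)) j) (lamseq n H l (Suc s)) \<and>
            pierces (component N (hamH n H (Suc s)) (j + (N + 1) div 2)) (lamseq n H l (Suc s))"
    if j: "1 \<le> j" "j \<le> (N - 1) div 2" and pi: "pierces (component ((N - 1) div 2) (hamH n H s) j) (lamseq n H l s)" for j
  proof -
    have jj: "j - 1 < ?M" using j d1 by simp
    let ?S = "{t \<in> hamH n H s. wt t = 3 \<and> t ! (j - 1)}"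
    have comp: "component ((N - 1) div 2) (hamH n H s) j = gf2span ?M ?S"
      unfolding component_def d1 ..
    have inHs: "c \<in> hamH n H s" if "c \<in> gf2span ?M ?S" for c
      using span_sub[of ?S "hamH n H s" ?M, OF _ Hs0 Hscl that] by blast
    have cF: "c \<in> F ?M" if "c \<in> gf2span ?M ?S" for c
      using inHs[OF that] HsF by blast
    have A: "pierces (component N (hamH n H (Suc s)) j) (lamseq n H l (Suc s))"
    proof (rule pierce_transfer[OF pi])
      fix c assume c: "c \<in> component ((N - 1) div 2) (hamH n H s) j"
      then have c': "c \<in> gf2span ?M ?S" unfolding comp .
      have w: "c @ False # zerov ?M \<in> component N (hamH n H (Suc s)) j"
        unfolding component_def N2 hamH.simps using lift_j[OF HsF jj c'] .
      have lc: "length c = ?M" using cF[OF c'] F_def by simp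
      have "lamseq n H l (Suc s) (vadd (zerov ?M) c @ [par (zerov ?M)] @ zerov ?M) = lamseq n H l s c"
        by (rule lam_step[OF HsF _ inHs[OF c']]) (simp add: F_def)
      then have "lamseq n H l (Suc s) (c @ False # zerov ?M) = lamseq n H l s c" using lc by simp
      then show "\<exists>w\<in>component N (hamH n H (Suc s)) j. lamseq n H l (Suc s) w = lamseq n H l s c"
        using w by blast
    qed
    have B: "pierces (component N (hamH n H (Suc s)) (j + (N + 1) div 2)) (lamseq n H l (Suc s))"
    proof (rule pierce_transfer[OF pi])
      fix c assume c: "c \<in> component ((N - 1) div 2) (hamH n H s) j"
      then have c': "c \<in> gf2span ?M ?S" unfolding comp .
      obtain x where x: "x \<in> F ?M" and
        w: "vadd x c @ [par x] @ x \<in> gf2span (2*?M+1) {w \<in> double ?M (hamH n H s). wt w = 3 \<and> w ! (?M + 1 + (j - 1))}"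
        using lift_k[OF HsF jj c'] by blast
      have idx': "j + (2 * ?M + 1 + 1) div 2 - 1 = ?M + 1 + (j - 1)" using j by simp
      have w': "vadd x c @ [par x] @ x \<in> component N (hamH n H (Suc s)) (j + (N + 1) div 2)"
        unfolding component_def N2 hamH.simps idx' by (rule w)
      have "lamseq n H l (Suc s) (vadd x c @ [par x] @ x) = lamseq n H l s c"
        by (rule lam_step[OF HsF x inHs[OF c']])
      then show "\<exists>w\<in>component N (hamH n H (Suc s)) (j + (N + 1) div 2). lamseq n H l (Suc s) w = lamseq n H l s c"
        using w' by blast
    qed
    show ?thesis using A B by blast
  qed
  show ?thesis using P1 P2 by blast
qed

end
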